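(* Let $D$ be a connected locally semicomplete digraph in which no inclusion-wise maximal weak hub is mixed. If $X$ and $Y$ are two distinct inclusion-wise maximal weak hubs of $D$, then $X\cap Y=\emptyset$.
   Context: Digraphs are finite, no loops, no parallel arcs; digons allowed. $x^+$, $x^-$ are out- and in-neighbourhoods. A digraph is semicomplete if any two distinct vertices are joined by at least one arc; locally semicomplete if every $x^+$ and every $x^-$ induces a semicomplete digraph. A weak hub is a set $X\subseteq V(D)$ with $D[X]$ strongly connected such that some vertex $x$ satisfies $X\subseteq x^-\setminus x^+$ or $X\subseteq x^+\setminus x^-$. A weak hub $X$ is mixed if there exist $x\notin X$ and $u,v\in X$ such that $xu$ and $vx$ are arcs. *)

theory Defs
  imports Main
begin

text \<open>A digraph is given by a finite vertex set V and an arc relation A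
 (A x y means the arc xy).
 Digons (A x y and A y x) are allowed; parallel arcs are excluded by using a relation.\<close>

definition digraph :: "'a set \<Rightarrow> ('a \<Rightarrow> 'a \<Rightarrow> bool) \<Rightarrow> bool" where
  "digraph V A \<longleftrightarrow> finite V \<and> (\<forall>x y. A x y \<longrightarrow> x \<in> V \<and> y \<in> V) \<and> (\<forall>x. \<not> A x x)"

definition out_nbhd :: "'a set \<Rightarrow> ('a \<Rightarrow> 'a \<Rightarrow> bool) \<Rightarrow> 'a \<Rightarrow> 'a set" where
  "out_nbhd V A x = {y \<in> V. A x y}"

definition in_nbhd :: "'a set \<Rightarrow> ('a \<Rightarrow> 'a \<Rightarrow> bool) \<Rightarrow> 'a \<Rightarrow> 'a set" where
  "in_nbhd V A x = {y \<in> V. A y x}"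

definition semicomplete_on :: "('a \<Rightarrow> 'a \<Rightarrow> bool) \<Rightarrow> 'a set \<Rightarrow> bool" where
  "semicomplete_on A S \<longleftrightarrow> (\<forall>x\<in>S. \<forall>y\<in>S. x \<noteq> y \<longrightarrow> A x y \<or> A y x)"

definition locally_semicomplete :: "'a set \<Rightarrow> ('a \<Rightarrow> 'a \<Rightarrow> bool) \<Rightarrow> bool" where
  "locally_semicomplete V A \<longleftrightarrow> digraph V A \<and>
     (\<forall>x\<in>V. semicomplete_on A (out_nbhd V A x) \<and> semicomplete_on A (in_nbhd V A x))"

definition induced_arcs :: "('a \<Rightarrow> 'a \<Rightarrow> bool) \<Rightarrow> 'a set \<Rightarrow> 'a \<Rightarrow> 'a \<Rightarrow> bool" where
  "induced_arcs A S x y \<longleftrightarrow> x \<in> S \<and> y \<in> S \<and> A x y"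

definition strongly_connected_on :: "('a \<Rightarrow> 'a \<Rightarrow> bool) \<Rightarrow> 'a set \<Rightarrow> bool" where
  "strongly_connected_on A S \<longleftrightarrow> S \<noteq> {} \<and>
     (\<forall>u\<in>S. \<forall>v\<in>S. (induced_arcs A S)\<^sup>*\<^sup>* u v)"

definition connected_digraph :: "'a set \<Rightarrow> ('a \<Rightarrow> 'a \<Rightarrow> bool) \<Rightarrow> bool" where
  "connected_digraph V A \<longleftrightarrow> V \<noteq> {} \<and>
     (\<forall>u\<in>V. \<forall>v\<in>V. (\<lambda>x y. A x y \<or> A y x)\<^sup>*\<^sup>* u v)"

definition weak_hub :: "'a set \<Rightarrow> ('a \<Rightarrow> 'a \<Rightarrow> bool) \<Rightarrow> 'a set \<Rightarrow> bool" where
  "weak_hub V A X \<longleftrightarrow> X \<subseteq> V \<and> strongly_connected_on A X \<and>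
     (\<exists>x\<in>V. X \<subseteq> in_nbhd V A x - out_nbhd V A x \<or> X \<subseteq> out_nbhd V A x - in_nbhd V A x)"

definition maximal_weak_hub :: "'a set \<Rightarrow> ('a \<Rightarrow> 'a \<Rightarrow> bool) \<Rightarrow> 'a set \<Rightarrow> bool" where
  "maximal_weak_hub V A X \<longleftrightarrow> weak_hub V A X \<and>
     (\<forall>Y. weak_hub V A Y \<and> X \<subseteq> Y \<longrightarrow> Y = X)"

definition mixed_hub :: "'a set \<Rightarrow> ('a \<Rightarrow> 'a \<Rightarrow> bool) \<Rightarrow> 'a set \<Rightarrow> bool" where
  "mixed_hub V A X \<longleftrightarrow> (\<exists>x\<in>V - X. \<exists>u\<in>X. \<exists>v\<in>X. A x u \<and> A v x)"

end

theory Submission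
  imports Defs
begin

lemma prop_in:
  assumes ls: "locally_semicomplete V A" and YV: "Y \<subseteq> V"
    and zV: "z \<in> V" and zY: "z \<notin> Y" and noz: "\<forall>u\<in>Y. \<not> A z u"
    and vz: "A v z"
    and w: "(induced_arcs A Y)\<^sup>*\<^sup>* v w"
  shows "A w z"
  using w
proof (induction rule: rtranclp_induct)
  case base then show ?case using vz by simp
next
  case (step a b)
  then have ab: "a \<in> Y" "b \<in> Y" "A a b" by (auto simp: induced_arcs_def)
  have "semicomplete_on A (out_nbhd V A a)" using ls ab YV by (auto simp: locally_semicomplete_def)
  moreover have "b \<in> out_nbhd V A a" "z \<in> out_nbhd V A a" using ab YV zV step by (auto simp: out_nbhd_def)
  moreover have "b \<noteq> z" using ab zY by auto
  ultimately have "A b z \<or> A z b" unfolding semicomplete_on_def by blast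
  then show ?case using noz ab by auto
qed

lemma prop_out:
  assumes ls: "locally_semicomplete V A" and YV: "Y \<subseteq> V"
    and zV: "z \<in> V" and zY: "z \<notin> Y" and noz: "\<forall>u\<in>Y. \<not> A u z"
    and vz: "A z v"
    and w: "(induced_arcs A Y)\<^sup>*\<^sup>* w v"
  shows "A z w"
  using w
proof (induction rule: converse_rtranclp_induct)
  case base then show ?case using vz by simp
next
  case (step a b)
  then have ab: "a \<in> Y" "b \<in> Y" "A a b" by (auto simp: induced_arcs_def)
  have "semicomplete_on A (in_nbhd V A b)" using ls ab YV by (auto simp: locally_semicomplete_def)
  moreover have "a \<in> in_nbhd V A b" "z \<in> in_nbhd V A b" using ab YV zV step by (auto simp: in_nbhd_def)
  moreover have "a \<noteq> z" using ab zY by auto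
  ultimately have "A a z \<or> A z a" unfolding semicomplete_on_def by blast
  then show ?case using noz ab by auto
qed

lemma walk_cross:
  assumes "(induced_arcs A Y)\<^sup>*\<^sup>* a b" "a \<notin> X" "b \<in> X"
  shows "\<exists>w u. w \<in> Y \<and> w \<notin> X \<and> u \<in> X \<and> A w u"
  using assms
proof (induction rule: rtranclp_induct)
  case base then show ?case by simp
next
  case (step b c)
  show ?case
  proof (cases "b \<in> X")
    case True then show ?thesis using step by blast
  next
    case False then show ?thesis using step by (auto simp: induced_arcs_def)
  qed
qed

lemma sc_mono:
  assumes "(induced_arcs A X)\<^sup>*\<^sup>* a b" "X \<subseteq> Z"
  shows "(induced_arcs A Z)\<^sup>*\<^sup>* a b"
proof -
  have "induced_arcs A X \<le> induced_arcs A Z" using assms(2) by (auto simp: induced_arcs_def)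
  then show ?thesis using assms(1) rtranclp_mono by blast
qed

lemma union_sc:
  assumes "strongly_connected_on A X" "strongly_connected_on A Y" "v \<in> X" "v \<in> Y"
  shows "strongly_connected_on A (X \<union> Y)"
proof -
  have r: "(induced_arcs A (X \<union> Y))\<^sup>*\<^sup>* a b" if "a \<in> X \<union> Y" "b \<in> X \<union> Y" for a b
  proof -
    have 1: "(induced_arcs A (X \<union> Y))\<^sup>*\<^sup>* a v"
      using that assms sc_mono[of A X _ _ "X \<union> Y"] sc_mono[of A Y _ _ "X \<union> Y"]
      unfolding strongly_connected_on_def by blast
    have 2: "(induced_arcs A (X \<union> Y))\<^sup>*\<^sup>* v b"
      using that assms sc_mono[of A X _ _ "X \<union> Y"] sc_mono[of A Y _ _ "X \<union> Y"]
      unfolding strongly_connected_on_def by blast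
    show ?thesis using 1 2 by simp
  qed
  show ?thesis unfolding strongly_connected_on_def using r assms(3) by blast
qed

lemma no_outside:
  assumes ls: "locally_semicomplete V A"
    and nm: "\<forall>Z. maximal_weak_hub V A Z \<longrightarrow> \<not> mixed_hub V A Z"
    and mX: "maximal_weak_hub V A X" and mY: "maximal_weak_hub V A Y"
    and ne: "X \<noteq> Y" and vX: "v \<in> X" and vY: "v \<in> Y"
    and zV: "z \<in> V" and zX: "z \<notin> X" and zY: "z \<notin> Y"
    and adj: "A v z \<or> A z v"
  shows False
proof -
  have hX: "weak_hub V A X" and hY: "weak_hub V A Y" using mX mY by (auto simp: maximal_weak_hub_def)
  have XV: "X \<subseteq> V" and YV: "Y \<subseteq> V" using hX hY by (auto simp: weak_hub_def)
  have scX: "strongly_connected_on A X" and scY: "strongly_connected_on A Y"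
    using hX hY by (auto simp: weak_hub_def)
  have nmX: "\<not> mixed_hub V A X" and nmY: "\<not> mixed_hub V A Y" using nm mX mY by auto
  have sc: "strongly_connected_on A (X \<union> Y)" using union_sc[OF scX scY vX vY] .
  have hub: "\<exists>x\<in>V. X \<union> Y \<subseteq> in_nbhd V A x - out_nbhd V A x \<or> X \<union> Y \<subseteq> out_nbhd V A x - in_nbhd V A x"
  proof (cases "A v z")
    case True
    have nX: "\<forall>u\<in>X. \<not> A z u" using nmX True zV zX vX unfolding mixed_hub_def by blast
    have nY: "\<forall>u\<in>Y. \<not> A z u" using nmY True zV zY vY unfolding mixed_hub_def by blast
    have aX: "\<forall>w\<in>X. A w z" using prop_in[OF ls XV zV zX nX True] scX vX
      unfolding strongly_connected_on_def by blast
    have aY: "\<forall>w\<in>Y. A w z" using prop_in[OF ls YV zV zY nY True] scY vY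
      unfolding strongly_connected_on_def by blast
    show ?thesis using aX aY nX nY XV YV zV by (auto simp: in_nbhd_def out_nbhd_def)
  next
    case False
    then have T: "A z v" using adj by simp
    have nX: "\<forall>u\<in>X. \<not> A u z" using nmX T zV zX vX unfolding mixed_hub_def by blast
    have nY: "\<forall>u\<in>Y. \<not> A u z" using nmY T zV zY vY unfolding mixed_hub_def by blast
    have aX: "\<forall>w\<in>X. A z w" using prop_out[OF ls XV zV zX nX T] scX vX
      unfolding strongly_connected_on_def by blast
    have aY: "\<forall>w\<in>Y. A z w" using prop_out[OF ls YV zV zY nY T] scY vY
      unfolding strongly_connected_on_def by blast
    show ?thesis using aX aY nX nY XV YV zV by (auto simp: in_nbhd_def out_nbhd_def)
  qed
  have "weak_hub V A (X \<union> Y)" using sc hub XV YV by (auto simp: weak_hub_def)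
  then have "X \<union> Y = X" "X \<union> Y = Y" using mX mY unfolding maximal_weak_hub_def by auto
  then show False using ne by auto
qed

lemma cross_case:
  assumes nm: "\<forall>Z. maximal_weak_hub V A Z \<longrightarrow> \<not> mixed_hub V A Z"
    and mX: "maximal_weak_hub V A X" and mY: "maximal_weak_hub V A Y"
    and vX: "v \<in> X" and xY: "x \<in> Y" and xX: "x \<notin> X"
    and yX: "y \<in> X" and yV: "y \<in> V"
    and Yy: "Y \<subseteq> out_nbhd V A y - in_nbhd V A y"
    and vY: "v \<in> Y"
  shows False
proof -
  have hY: "weak_hub V A Y" using mY by (auto simp: maximal_weak_hub_def)
  have YV: "Y \<subseteq> V" using hY by (auto simp: weak_hub_def)
  have "(induced_arcs A Y)\<^sup>*\<^sup>* x v" using hY xY vY by (auto simp: weak_hub_def strongly_connected_on_def)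
  then obtain w u where wu: "w \<in> Y" "w \<notin> X" "u \<in> X" "A w u" using walk_cross xX vX by metis
  have "A y w" using Yy wu by (auto simp: out_nbhd_def)
  then have "mixed_hub V A X" unfolding mixed_hub_def using wu YV yX by blast
  then show False using nm mX by auto
qed

theorem claim4p4:
  fixes V :: "'a set" and A :: "'a \<Rightarrow> 'a \<Rightarrow> bool" and X Y :: "'a set"
  assumes "locally_semicomplete V A"
    and "connected_digraph V A"
    and "\<forall>Z. maximal_weak_hub V A Z \<longrightarrow> \<not> mixed_hub V A Z"
    and "maximal_weak_hub V A X"
    and "maximal_weak_hub V A Y"
    and "X \<noteq> Y"
  shows "X \<inter> Y = {}"
proof (rule ccontr)
  assume "X \<inter> Y \<noteq> {}"
  then obtain v where vX: "v \<in> X" and vY: "v \<in> Y" by blast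
  note ls = assms(1) and nm = assms(3) and mX = assms(4) and mY = assms(5) and ne = assms(6)
  have hX: "weak_hub V A X" and hY: "weak_hub V A Y" using mX mY by (auto simp: maximal_weak_hub_def)
  have dg: "\<forall>x. \<not> A x x" using ls by (auto simp: locally_semicomplete_def digraph_def)
  obtain x where xV: "x \<in> V" and
    xc: "X \<subseteq> in_nbhd V A x - out_nbhd V A x \<or> X \<subseteq> out_nbhd V A x - in_nbhd V A x"
    using hX by (auto simp: weak_hub_def)
  obtain y where yV: "y \<in> V" and
    yc: "Y \<subseteq> in_nbhd V A y - out_nbhd V A y \<or> Y \<subseteq> out_nbhd V A y - in_nbhd V A y"
    using hY by (auto simp: weak_hub_def)
  have xX: "x \<notin> X" using xc dg by (auto simp: in_nbhd_def out_nbhd_def)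
  have yY: "y \<notin> Y" using yc dg by (auto simp: in_nbhd_def out_nbhd_def)
  have vx: "A v x \<or> A x v" using xc vX by (auto simp: in_nbhd_def out_nbhd_def)
  have vy: "A v y \<or> A y v" using yc vY by (auto simp: in_nbhd_def out_nbhd_def)
  have xY: "x \<in> Y" using no_outside[OF ls nm mX mY ne vX vY xV xX _ vx] by blast
  have yX: "y \<in> X" using no_outside[OF ls nm mX mY ne vX vY yV _ yY vy] by blast
  from xc yc show False
  proof (elim disjE)
    assume a: "X \<subseteq> in_nbhd V A x - out_nbhd V A x" and b: "Y \<subseteq> in_nbhd V A y - out_nbhd V A y"
    show False using a b xY yX by (auto simp: in_nbhd_def out_nbhd_def)
  next
    assume a: "X \<subseteq> out_nbhd V A x - in_nbhd V A x" and b: "Y \<subseteq> out_nbhd V A y - in_nbhd V A y"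
    show False using a b xY yX by (auto simp: in_nbhd_def out_nbhd_def)
  next
    assume b: "Y \<subseteq> out_nbhd V A y - in_nbhd V A y"
    show False using cross_case[OF nm mX mY vX xY xX yX yV b vY] .
  next
    assume a: "X \<subseteq> out_nbhd V A x - in_nbhd V A x"
    show False using cross_case[OF nm mY mX vY yX yY xY xV a vX] .
  qed
qed

end
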